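(* Let $n\ge2$ and $T\ge4$ be integers, $H:=\lceil\log_2T\rceil$, $\alpha=1/(4H)$ and $\alpha_0=\frac{\sqrt{\alpha/8}}{H^3}$. Let $Z^{(1)},\dots,Z^{(T)}\in[0,1]^n$ (with $Z^{(0)}:=0$) and $P^{(1)},\dots,P^{(T)}\in\Delta^n$ satisfy: (1) for each $0\le h\le H$ and $1\le t\le T-h$, $\|(D_hZ)^{(t)}\|_\infty\le H\cdot(\alpha_0H^3)^h$; (2) the sequence $P^{(1)},\dots,P^{(T)}$ is $\zeta$-consecutively close for some $\zeta\in[1/(2T),\alpha^4/8256]$. Then $$\sum_{t=1}^T\mathrm{Var}_{P^{(t)}}\big(Z^{(t)}-Z^{(t-1)}\big)\le2\alpha\sum_{t=1}^T\mathrm{Var}_{P^{(t)}}\big(Z^{(t-1)}\big)+165120(1+\zeta)H^5+2.$$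
   Context: Finite differences: $(D_0Z)^{(t)}=Z^{(t)}$, $(D_hZ)^{(t)}=(D_{h-1}Z)^{(t+1)}-(D_{h-1}Z)^{(t)}$ for $1\le t\le T-h$. A sequence of full-support $P^{(t)}\in\Delta^n$ is $\zeta$-consecutively close if for each $1\le t<T$, $\max\{\max_jP^{(t)}(j)/P^{(t+1)}(j),\max_jP^{(t+1)}(j)/P^{(t)}(j)\}\le1+\zeta$. $\mathrm{Var}_P(v)=\sum_jP(j)(v(j)-\langle P,v\rangle)^2$. *)

theory Defs
  imports "HOL-Analysis.Analysis"
begin

text \<open>Vectors in R^n are functions nat => real, indexed by {0..<n}.
  A sequence of vectors is a function nat => (nat => real), indexed by time t.\<close>

fun fdiff :: "nat \<Rightarrow> (nat \<Rightarrow> nat \<Rightarrow> real) \<Rightarrow> nat \<Rightarrow> nat \<Rightarrow> real" where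
  "fdiff 0 Z t = Z t"
| "fdiff (Suc h) Z t = (\<lambda>j. fdiff h Z (Suc t) j - fdiff h Z t j)"

definition in_simplex :: "nat \<Rightarrow> (nat \<Rightarrow> real) \<Rightarrow> bool" where
  "in_simplex n p \<longleftrightarrow> (\<forall>j<n. p j \<ge> 0) \<and> (\<Sum>j<n. p j) = 1"

definition full_support :: "nat \<Rightarrow> (nat \<Rightarrow> real) \<Rightarrow> bool" where
  "full_support n p \<longleftrightarrow> (\<forall>j<n. p j > 0)"

definition consecutively_close ::
  "nat \<Rightarrow> nat \<Rightarrow> real \<Rightarrow> (nat \<Rightarrow> nat \<Rightarrow> real) \<Rightarrow> bool" where
  "consecutively_close n T \<zeta> P \<longleftrightarrow>
     (\<forall>t. 1 \<le> t \<and> t \<le> T \<longrightarrow> in_simplex n (P t) \<and> full_support n (P t)) \<and>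
     (\<forall>t. 1 \<le> t \<and> t < T \<longrightarrow>
        max (Max ((\<lambda>j. P t j / P (Suc t) j) ` {..<n}))
            (Max ((\<lambda>j. P (Suc t) j / P t j) ` {..<n})) \<le> 1 + \<zeta>)"

definition inner_n :: "nat \<Rightarrow> (nat \<Rightarrow> real) \<Rightarrow> (nat \<Rightarrow> real) \<Rightarrow> real" where
  "inner_n n p v = (\<Sum>j<n. p j * v j)"

definition Var_P :: "nat \<Rightarrow> (nat \<Rightarrow> real) \<Rightarrow> (nat \<Rightarrow> real) \<Rightarrow> real" where
  "Var_P n p v = (\<Sum>j<n. p j * (v j - inner_n n p v)^2)"

definition sup_norm :: "nat \<Rightarrow> (nat \<Rightarrow> real) \<Rightarrow> real" where
  "sup_norm n v = Max ((\<lambda>j. \<bar>v j\<bar>) ` {..<n})"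

end

theory Submission
  imports Defs
begin


lemma cs_w:
  fixes p f g :: "'a \<Rightarrow> real"
  assumes "\<forall>x\<in>A. p x \<ge> 0"
  shows "(\<Sum>x\<in>A. p x * f x * g x)\<^sup>2 \<le> (\<Sum>x\<in>A. p x * (f x)\<^sup>2) * (\<Sum>x\<in>A. p x * (g x)\<^sup>2)"
proof -
  have e1: "(\<Sum>x\<in>A. p x * f x * g x) = (\<Sum>x\<in>A. (sqrt (p x) * f x) * (sqrt (p x) * g x))"
    by (rule sum.cong) (use assms in \<open>auto simp: algebra_simps real_sqrt_mult[symmetric]\<close>)
  have e2: "\<And>f. (\<Sum>x\<in>A. p x * (f x)\<^sup>2) = (\<Sum>x\<in>A. (sqrt (p x) * f x)\<^sup>2)"
    by (rule sum.cong) (use assms in \<open>auto simp: power_mult_distrib\<close>)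
  show ?thesis unfolding e1 e2 by (rule Cauchy_Schwarz_ineq_sum)
qed

lemma sbp:
  fixes w a c e :: "nat \<Rightarrow> real"
  assumes c: "\<And>t. c t = a (t+1) - a t" and e: "\<And>t. e t = c (t+1) - c t" and N: "N \<ge> 1"
  shows "(\<Sum>t=1..N. w t * (c t)\<^sup>2) = w N * c N * a (N+1) - w 1 * c 1 * a 1
     - (\<Sum>u\<in>{1..<N}. w (u+1) * a (u+1) * e u) + (\<Sum>u\<in>{1..<N}. (w u - w (u+1)) * a (u+1) * c u)"
  using N
proof (induction N rule: dec_induct)
  case base
  then show ?case by (simp add: c power2_eq_square algebra_simps)
next
  case (step m)
  have "(\<Sum>t=1..Suc m. w t * (c t)\<^sup>2) = (\<Sum>t=1..m. w t * (c t)\<^sup>2) + w (Suc m) * (c (Suc m))\<^sup>2"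
    using step by simp
  also have "\<dots> = w m * c m * a (m+1) - w 1 * c 1 * a 1
     - (\<Sum>u\<in>{1..<m}. w (u+1) * a (u+1) * e u) + (\<Sum>u\<in>{1..<m}. (w u - w (u+1)) * a (u+1) * c u)
     + w (Suc m) * (c (Suc m))\<^sup>2" using step by simp
  also have "\<dots> = w (Suc m) * c (Suc m) * a (Suc m+1) - w 1 * c 1 * a 1
     - (\<Sum>u\<in>{1..<Suc m}. w (u+1) * a (u+1) * e u) + (\<Sum>u\<in>{1..<Suc m}. (w u - w (u+1)) * a (u+1) * c u)"
    using step(1) by (simp add: c[of "Suc m"] e[of m] power2_eq_square algebra_simps)
  finally show ?case by simp
qed




lemma chain:
  fixes S b :: "nat \<Rightarrow> real" and H :: nat and \<kappa> \<rho> \<delta>1 \<delta>2 :: real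
  assumes S_nn: "\<forall>h. S h \<ge> 0"
    and rec: "\<forall>m. m+1 < H \<longrightarrow> (\<exists>X Y. X \<ge> 0 \<and> Y \<ge> 0 \<and> X\<^sup>2 \<le> \<kappa> * S m * S (m+2)
                  \<and> Y\<^sup>2 \<le> (\<kappa>-1)\<^sup>2 * \<kappa> * S m * S (m+1) \<and> S (m+1) \<le> b (m+1) + X + Y)"
    and bnd: "\<forall>h. 1 \<le> h \<and> h < H \<longrightarrow> b h \<le> \<delta>1 * (\<rho>/2)^h * S 0"
    and base: "S 1 \<ge> \<rho> * S 0" and S0pos: "S 0 > 0" and rpos: "\<rho> > 0" and kap: "\<kappa> \<ge> 1"
    and d2: "(\<kappa>-1)\<^sup>2 * \<kappa> * (2/\<rho>) \<le> \<delta>2\<^sup>2" and d1nn: "\<delta>1 \<ge> 0" and d2nn: "\<delta>2 \<ge> 0" and dsum: "\<delta>1 + \<delta>2 \<le> 1"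
    and gam: "((1-\<delta>1-\<delta>2)\<^sup>2/\<kappa>)^H \<ge> 1/2"
  shows "S H \<ge> (\<rho>/2)^H * S 0"
proof -
  define \<gamma> where "\<gamma> = (1-\<delta>1-\<delta>2)\<^sup>2/\<kappa>"
  have g0: "\<gamma> \<ge> 0" unfolding \<gamma>_def using kap by simp
  have g1: "\<gamma> \<le> 1"
  proof -
    have "(1-\<delta>1-\<delta>2)\<^sup>2 \<le> 1" using d1nn d2nn dsum by (intro power_le_one) auto
    also have "1 \<le> \<kappa>" using kap .
    finally show ?thesis unfolding \<gamma>_def using kap by simp
  qed
  have gk: "\<gamma>^k \<ge> 1/2" if "k \<le> H" for k
  proof -
    have "\<gamma>^H \<le> \<gamma>^k" using power_decreasing[OF that g0 g1] .
    then show ?thesis using gam unfolding \<gamma>_def by simp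
  qed
  have claim: "Suc k \<le> H \<longrightarrow> S (Suc k) \<ge> \<rho> * \<gamma>^k * S k \<and> S (Suc k) \<ge> (\<rho>/2)^(Suc k) * S 0" for k
  proof (induction k)
    case 0
    have "S 1 \<ge> 0" using S_nn by simp
    then show ?case using base by simp
  next
    case (Suc k)
    show ?case
    proof
      assume kH: "Suc (Suc k) \<le> H"
      from Suc kH have IH1: "S (Suc k) \<ge> \<rho> * \<gamma>^k * S k" and IH2: "S (Suc k) \<ge> (\<rho>/2)^(Suc k) * S 0" by auto
      define Sh where "Sh = S (Suc k)"
      have Shpos: "Sh > 0" unfolding Sh_def using IH2 S0pos rpos
        by (smt (verit, best) half_gt_zero mult_pos_pos zero_less_power)
      obtain X Y where XY: "X \<ge> 0" "Y \<ge> 0" "X\<^sup>2 \<le> \<kappa> * S k * S (k+2)"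
          "Y\<^sup>2 \<le> (\<kappa>-1)\<^sup>2 * \<kappa> * S k * S (k+1)" "S (k+1) \<le> b (k+1) + X + Y"
        using rec kH by (metis Suc_eq_plus1 Suc_le_lessD)
      have gkk: "\<gamma>^k \<ge> 1/2" using gk kH by simp
      have Sk: "S k \<le> (2/\<rho>) * Sh"
      proof -
        have "(\<rho>/2) * S k \<le> \<rho> * \<gamma>^k * S k"
          using gkk rpos S_nn by (intro mult_right_mono) auto
        then have "(\<rho>/2) * S k \<le> Sh" using IH1 Sh_def by simp
        then show ?thesis using rpos by (simp add: field_simps)
      qed
      have bb: "b (k+1) \<le> \<delta>1 * Sh"
      proof -
        have "b (k+1) \<le> \<delta>1 * (\<rho>/2)^(Suc k) * S 0" using bnd kH by (metis Suc_eq_plus1 Suc_le_lessD le_add2)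
        also have "\<dots> \<le> \<delta>1 * Sh" using IH2 \<open>\<delta>1 \<ge> 0\<close> unfolding Sh_def
          by (simp add: mult.assoc mult_left_mono)
        finally show ?thesis .
      qed
      have Y2: "Y\<^sup>2 \<le> (\<delta>2 * Sh)\<^sup>2"
      proof -
        have "Y\<^sup>2 \<le> (\<kappa>-1)\<^sup>2 * \<kappa> * S k * Sh" using XY Sh_def by simp
        also have "\<dots> \<le> (\<kappa>-1)\<^sup>2 * \<kappa> * ((2/\<rho>) * Sh) * Sh"
          using Sk kap Shpos by (intro mult_right_mono mult_left_mono) auto
        also have "\<dots> = ((\<kappa>-1)\<^sup>2 * \<kappa> * (2/\<rho>)) * Sh\<^sup>2" by (simp add: power2_eq_square)
        also have "\<dots> \<le> \<delta>2\<^sup>2 * Sh\<^sup>2" using d2 by (intro mult_right_mono) auto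
        finally show ?thesis by (simp add: power_mult_distrib)
      qed
      have Yb: "Y \<le> \<delta>2 * Sh"
        using Y2 \<open>\<delta>2 \<ge> 0\<close> Shpos by (meson power2_le_imp_le zero_le_mult_iff less_imp_le)
      have Xl: "X \<ge> (1-\<delta>1-\<delta>2) * Sh" using XY(5) bb Yb Sh_def by (simp add: algebra_simps)
      have X2: "X\<^sup>2 \<ge> ((1-\<delta>1-\<delta>2) * Sh)\<^sup>2"
        using Xl dsum Shpos by (intro power_mono) auto
      have m1: "\<kappa> * S k * S (k+2) \<ge> (1-\<delta>1-\<delta>2)\<^sup>2 * Sh\<^sup>2"
        using X2 XY(3) by (simp add: power_mult_distrib)
      have "\<rho> * \<gamma>^k * ((1-\<delta>1-\<delta>2)\<^sup>2 * Sh\<^sup>2) \<le> \<rho> * \<gamma>^k * (\<kappa> * S k * S (k+2))"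
        using m1 rpos g0 by (intro mult_left_mono) auto
      also have "\<dots> = \<kappa> * S (k+2) * (\<rho> * \<gamma>^k * S k)" by (simp add: algebra_simps)
      also have "\<dots> \<le> \<kappa> * S (k+2) * Sh"
        using IH1 Sh_def kap S_nn by (intro mult_left_mono) auto
      finally have m2: "\<rho> * \<gamma>^k * (1-\<delta>1-\<delta>2)\<^sup>2 * Sh * Sh \<le> \<kappa> * S (k+2) * Sh"
        by (simp add: power2_eq_square algebra_simps)
      have m3: "\<rho> * \<gamma>^k * (1-\<delta>1-\<delta>2)\<^sup>2 * Sh \<le> \<kappa> * S (k+2)"
        using m2 Shpos by (simp add: mult_le_cancel_right)
      have r1: "S (Suc (Suc k)) \<ge> \<rho> * \<gamma>^(Suc k) * S (Suc k)"
      proof -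
        have "\<rho> * \<gamma>^(Suc k) * Sh = (\<rho> * \<gamma>^k * (1-\<delta>1-\<delta>2)\<^sup>2 * Sh) / \<kappa>"
          by (simp only: power_Suc \<gamma>_def) (simp add: algebra_simps)
        also have "\<dots> \<le> S (k+2)" using m3 kap by (subst divide_le_eq) (simp add: mult.commute)
        finally show ?thesis unfolding Sh_def by (simp add: numeral_2_eq_2)
      qed
      have "S (Suc (Suc k)) \<ge> (\<rho>/2) * S (Suc k)"
      proof -
        have "(\<rho>/2) * S (Suc k) \<le> \<rho> * \<gamma>^(Suc k) * S (Suc k)"
          using gk[of "Suc k"] kH rpos S_nn by (intro mult_right_mono) auto
        then show ?thesis using r1 by linarith
      qed
      moreover have "(\<rho>/2) * S (Suc k) \<ge> (\<rho>/2) * ((\<rho>/2)^(Suc k) * S 0)"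
        using IH2 rpos by (intro mult_left_mono) auto
      moreover have "(\<rho>/2)^(Suc (Suc k)) * S 0 = (\<rho>/2) * ((\<rho>/2)^(Suc k) * S 0)"
        by (simp only: power_Suc mult.assoc)
      ultimately have "S (Suc (Suc k)) \<ge> (\<rho>/2)^(Suc (Suc k)) * S 0" by linarith
      with r1 show "S (Suc (Suc k)) \<ge> \<rho> * \<gamma>^(Suc k) * S (Suc k) \<and> S (Suc (Suc k)) \<ge> (\<rho>/2)^(Suc (Suc k)) * S 0"
        by simp
    qed
  qed
  show ?thesis
  proof (cases H)
    case 0 then show ?thesis by simp
  next
    case (Suc k) then show ?thesis using claim[of k] by simp
  qed
qed




lemma rec_step:
  fixes w :: "nat \<Rightarrow> 'k \<Rightarrow> real" and g :: "nat \<Rightarrow> nat \<Rightarrow> 'k \<Rightarrow> real" and S :: "nat \<Rightarrow> real"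
  assumes K: "finite K"
    and S_def: "\<And>h. S h = (\<Sum>t=1..T-h. \<Sum>k\<in>K. w t k * (g h t k)\<^sup>2)"
    and gsuc: "\<And>h t k. g (Suc h) t k = g h (Suc t) k - g h t k"
    and w_nn: "\<And>t k. 1 \<le> t \<Longrightarrow> t \<le> T \<Longrightarrow> k \<in> K \<Longrightarrow> w t k \<ge> 0"
    and wup: "\<And>t k. 1 \<le> t \<Longrightarrow> t < T \<Longrightarrow> k \<in> K \<Longrightarrow> w (t+1) k \<le> \<kappa> * w t k"
    and wdn: "\<And>t k. 1 \<le> t \<Longrightarrow> t < T \<Longrightarrow> k \<in> K \<Longrightarrow> w t k \<le> \<kappa> * w (t+1) k"
    and kap: "\<kappa> \<ge> 1" and mT: "m + 1 < T"
  shows "\<exists>X Y. X \<ge> 0 \<and> Y \<ge> 0 \<and> X\<^sup>2 \<le> \<kappa> * S m * S (m+2)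
     \<and> Y\<^sup>2 \<le> (\<kappa>-1)\<^sup>2 * \<kappa> * S m * S (m+1)
     \<and> S (m+1) \<le> \<bar>\<Sum>k\<in>K. w (T-(m+1)) k * g (m+1) (T-(m+1)) k * g m (T-m) k\<bar>
                 + \<bar>\<Sum>k\<in>K. w 1 k * g (m+1) 1 k * g m 1 k\<bar> + X + Y"
proof -
  define N where "N = T - (m+1)"
  have N1: "N \<ge> 1" using mT unfolding N_def by simp
  have NT: "N + 1 = T - m" using mT unfolding N_def by simp
  define B1 where "B1 = (\<Sum>k\<in>K. w N k * g (m+1) N k * g m (N+1) k)"
  define B2 where "B2 = (\<Sum>k\<in>K. w 1 k * g (m+1) 1 k * g m 1 k)"
  define M where "M = (\<Sum>k\<in>K. \<Sum>u\<in>{1..<N}. w (u+1) k * g m (u+1) k * g (m+2) u k)"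
  define E where "E = (\<Sum>k\<in>K. \<Sum>u\<in>{1..<N}. (w u k - w (u+1) k) * g m (u+1) k * g (m+1) u k)"
  have percomp: "(\<Sum>t=1..N. w t k * (g (m+1) t k)\<^sup>2) = w N k * g (m+1) N k * g m (N+1) k - w 1 k * g (m+1) 1 k * g m 1 k
     - (\<Sum>u\<in>{1..<N}. w (u+1) k * g m (u+1) k * g (m+2) u k) + (\<Sum>u\<in>{1..<N}. (w u k - w (u+1) k) * g m (u+1) k * g (m+1) u k)" for k
    by (rule sbp[where a="\<lambda>t. g m t k" and c = "\<lambda>t. g (m+1) t k" and e="\<lambda>t. g (m+2) t k" and w="\<lambda>t. w t k", OF _ _ N1])
      (simp_all add: gsuc numeral_2_eq_2)
  have Seq: "S (m+1) = B1 - B2 - M + E"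
  proof -
    have "S (m+1) = (\<Sum>k\<in>K. \<Sum>t=1..N. w t k * (g (m+1) t k)\<^sup>2)" unfolding S_def N_def by (rule sum.swap)
    also have "\<dots> = (\<Sum>k\<in>K. w N k * g (m+1) N k * g m (N+1) k - w 1 k * g (m+1) 1 k * g m 1 k
     - (\<Sum>u\<in>{1..<N}. w (u+1) k * g m (u+1) k * g (m+2) u k) + (\<Sum>u\<in>{1..<N}. (w u k - w (u+1) k) * g m (u+1) k * g (m+1) u k))"
      using percomp by simp
    also have "\<dots> = B1 - B2 - M + E" unfolding B1_def B2_def M_def E_def
      by (simp add: sum.distrib sum_subtractf)
    finally show ?thesis .
  qed
  define A1 where "A1 = (\<Sum>(u,k)\<in>{1..<N}\<times>K. w (u+1) k * (g m (u+1) k)\<^sup>2)"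
  define A2 where "A2 = (\<Sum>(u,k)\<in>{1..<N}\<times>K. w (u+1) k * (g (m+2) u k)\<^sup>2)"
  define A3 where "A3 = (\<Sum>(u,k)\<in>{1..<N}\<times>K. w (u+1) k * (g (m+1) u k)\<^sup>2)"
  have pnn: "\<forall>x\<in>{1..<N}\<times>K. (case x of (u,k) \<Rightarrow> w (u+1) k) \<ge> 0"
    using w_nn N_def by auto
  have Sm_nn: "S h \<ge> 0" for h
    unfolding S_def by (intro sum_nonneg) (use w_nn in auto)
  have A1b: "A1 \<le> S m"
  proof -
    have "A1 = (\<Sum>u\<in>{1..<N}. (\<lambda>t. \<Sum>k\<in>K. w t k * (g m t k)\<^sup>2) (Suc u))"
      unfolding A1_def by (simp add: sum.cartesian_product)
    also have "\<dots> = (\<Sum>t\<in>Suc ` {1..<N}. \<Sum>k\<in>K. w t k * (g m t k)\<^sup>2)"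
      by (subst sum.reindex) (simp_all add: inj_on_def)
    also have "\<dots> \<le> (\<Sum>t=1..T-m. \<Sum>k\<in>K. w t k * (g m t k)\<^sup>2)"
      by (rule sum_mono2) (use NT w_nn in \<open>auto intro!: sum_nonneg\<close>)
    finally show ?thesis unfolding S_def .
  qed
  have A2b: "A2 \<le> \<kappa> * S (m+2)"
  proof -
    have "A2 = (\<Sum>u\<in>{1..<N}. \<Sum>k\<in>K. w (u+1) k * (g (m+2) u k)\<^sup>2)"
      unfolding A2_def by (simp add: sum.cartesian_product)
    also have "\<dots> \<le> (\<Sum>u\<in>{1..<N}. \<Sum>k\<in>K. \<kappa> * (w u k * (g (m+2) u k)\<^sup>2))"
      by (intro sum_mono) (use wup N_def in \<open>auto simp: mult.assoc[symmetric] intro!: mult_right_mono\<close>)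
    also have "\<dots> = \<kappa> * (\<Sum>u\<in>{1..<N}. \<Sum>k\<in>K. w u k * (g (m+2) u k)\<^sup>2)"
      by (simp add: sum_distrib_left)
    also have "{1..<N} = {1..T-(m+2)}" using N1 unfolding N_def by auto
    finally show ?thesis unfolding S_def .
  qed
  have A3b: "A3 \<le> \<kappa> * S (m+1)"
  proof -
    have "A3 = (\<Sum>u\<in>{1..<N}. \<Sum>k\<in>K. w (u+1) k * (g (m+1) u k)\<^sup>2)"
      unfolding A3_def by (simp add: sum.cartesian_product)
    also have "\<dots> \<le> (\<Sum>u\<in>{1..<N}. \<Sum>k\<in>K. \<kappa> * (w u k * (g (m+1) u k)\<^sup>2))"
      by (intro sum_mono) (use wup N_def in \<open>auto simp: mult.assoc[symmetric] intro!: mult_right_mono\<close>)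
    also have "\<dots> = \<kappa> * (\<Sum>u\<in>{1..<N}. \<Sum>k\<in>K. w u k * (g (m+1) u k)\<^sup>2)"
      by (simp add: sum_distrib_left)
    also have "\<dots> \<le> \<kappa> * (\<Sum>u=1..N. \<Sum>k\<in>K. w u k * (g (m+1) u k)\<^sup>2)"
      using kap by (intro mult_left_mono sum_mono2) (use w_nn N_def in \<open>auto intro!: sum_nonneg\<close>)
    finally show ?thesis unfolding S_def N_def .
  qed
  have A_nn: "A1 \<ge> 0" "A2 \<ge> 0" "A3 \<ge> 0"
    unfolding A1_def A2_def A3_def using pnn by (auto intro!: sum_nonneg)
  define X where "X = \<bar>M\<bar>"
  have X2: "X\<^sup>2 \<le> \<kappa> * S m * S (m+2)"
  proof -
    have "M = (\<Sum>(u,k)\<in>{1..<N}\<times>K. w (u+1) k * g m (u+1) k * g (m+2) u k)"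
      unfolding M_def by (subst sum.swap) (simp add: sum.cartesian_product)
    also have "\<dots> = (\<Sum>x\<in>{1..<N}\<times>K. (\<lambda>(u,k). w (u+1) k) x * (\<lambda>(u,k). g m (u+1) k) x * (\<lambda>(u,k). g (m+2) u k) x)"
      by (simp add: case_prod_beta)
    finally have "M\<^sup>2 \<le> (\<Sum>x\<in>{1..<N}\<times>K. (\<lambda>(u,k). w (u+1) k) x * ((\<lambda>(u,k). g m (u+1) k) x)\<^sup>2)
        * (\<Sum>x\<in>{1..<N}\<times>K. (\<lambda>(u,k). w (u+1) k) x * ((\<lambda>(u,k). g (m+2) u k) x)\<^sup>2)"
      using cs_w[OF pnn] by simp
    also have "\<dots> = A1 * A2" unfolding A1_def A2_def by (simp add: case_prod_beta)
    also have "\<dots> \<le> S m * (\<kappa> * S (m+2))"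
      using A1b A2b A_nn Sm_nn by (rule_tac mult_mono) auto
    finally show ?thesis unfolding X_def by (simp add: algebra_simps)
  qed
  define Y' where "Y' = (\<Sum>(u,k)\<in>{1..<N}\<times>K. w (u+1) k * \<bar>g m (u+1) k\<bar> * \<bar>g (m+1) u k\<bar>)"
  have Y'2: "Y'\<^sup>2 \<le> S m * (\<kappa> * S (m+1))"
  proof -
    have "Y' = (\<Sum>x\<in>{1..<N}\<times>K. (\<lambda>(u,k). w (u+1) k) x * (\<lambda>(u,k). \<bar>g m (u+1) k\<bar>) x * (\<lambda>(u,k). \<bar>g (m+1) u k\<bar>) x)"
      unfolding Y'_def by (simp add: case_prod_beta)
    then have "Y'\<^sup>2 \<le> (\<Sum>x\<in>{1..<N}\<times>K. (\<lambda>(u,k). w (u+1) k) x * ((\<lambda>(u,k). \<bar>g m (u+1) k\<bar>) x)\<^sup>2)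
        * (\<Sum>x\<in>{1..<N}\<times>K. (\<lambda>(u,k). w (u+1) k) x * ((\<lambda>(u,k). \<bar>g (m+1) u k\<bar>) x)\<^sup>2)"
      using cs_w[OF pnn] by simp
    also have "\<dots> = A1 * A3" unfolding A1_def A3_def by (simp add: case_prod_beta)
    also have "\<dots> \<le> S m * (\<kappa> * S (m+1))"
      using A1b A3b A_nn Sm_nn by (rule_tac mult_mono) auto
    finally show ?thesis .
  qed
  have Y'nn: "Y' \<ge> 0" unfolding Y'_def using pnn by (auto intro!: sum_nonneg)
  define Y where "Y = \<bar>E\<bar>"
  have wdiff: "\<bar>w u k - w (u+1) k\<bar> \<le> (\<kappa>-1) * w (u+1) k" if "u \<in> {1..<N}" "k \<in> K" for u k
  proof -
    have u: "1 \<le> u" "u < T" using that N_def by auto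
    have a: "w u k \<le> \<kappa> * w (u+1) k" using wdn[OF u that(2)] .
    have b: "w (u+1) k \<le> \<kappa> * w u k" using wup[OF u that(2)] .
    have w1: "w (u+1) k \<ge> 0" using w_nn u that(2) by simp
    have c: "\<kappa> * (w (u+1) k - w u k) \<le> \<kappa> * ((\<kappa>-1) * w (u+1) k)"
    proof -
      have "\<kappa> * (w (u+1) k - w u k) \<le> (\<kappa>-1) * w (u+1) k" using b by (simp add: algebra_simps)
      also have "\<dots> \<le> \<kappa> * ((\<kappa>-1) * w (u+1) k)"
      proof -
        have x0: "(\<kappa>-1) * w (u+1) k \<ge> 0" using kap w1 by simp
        show ?thesis using mult_right_mono[OF kap x0] by simp
      qed
      finally show ?thesis .
    qed
    have d: "w (u+1) k - w u k \<le> (\<kappa>-1) * w (u+1) k" by (rule mult_left_le_imp_le[OF c]) (use kap in simp)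
    have e: "w u k - w (u+1) k \<le> (\<kappa>-1) * w (u+1) k" using a by (simp add: algebra_simps)
    show ?thesis using d e by (intro abs_leI) linarith+
  qed
  have Yb: "Y \<le> (\<kappa>-1) * Y'"
  proof -
    have pw: "\<bar>(w u k - w (Suc u) k) * g m (Suc u) k * g (Suc m) u k\<bar> \<le> (\<kappa>-1) * (w (Suc u) k * \<bar>g m (Suc u) k\<bar> * \<bar>g (Suc m) u k\<bar>)"
      if uk: "(u,k) \<in> {1..<N}\<times>K" for u k
    proof -
      have f1: "\<bar>w u k - w (u+1) k\<bar> * \<bar>g m (u+1) k\<bar> \<le> (\<kappa>-1) * w (u+1) k * \<bar>g m (u+1) k\<bar>"
        using wdiff uk by (intro mult_right_mono) (auto simp del: One_nat_def)
      have "\<bar>w u k - w (u+1) k\<bar> * \<bar>g m (u+1) k\<bar> * \<bar>g (m+1) u k\<bar> \<le> (\<kappa>-1) * w (u+1) k * \<bar>g m (u+1) k\<bar> * \<bar>g (m+1) u k\<bar>"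
        using mult_right_mono[OF f1, of "\<bar>g (m+1) u k\<bar>"] by simp
      then show ?thesis by (simp add: abs_mult mult.assoc)
    qed
    have "E = (\<Sum>(u,k)\<in>{1..<N}\<times>K. (w u k - w (u+1) k) * g m (u+1) k * g (m+1) u k)"
      unfolding E_def by (subst sum.swap) (simp add: sum.cartesian_product)
    then have "Y \<le> (\<Sum>x\<in>{1..<N}\<times>K. \<bar>(\<lambda>(u,k). (w u k - w (u+1) k) * g m (u+1) k * g (m+1) u k) x\<bar>)"
      unfolding Y_def by (simp only: sum_abs)
    also have "\<dots> = (\<Sum>(u,k)\<in>{1..<N}\<times>K. \<bar>(w u k - w (u+1) k) * g m (u+1) k * g (m+1) u k\<bar>)"
      by (simp add: case_prod_beta)
    also have "\<dots> \<le> (\<Sum>(u,k)\<in>{1..<N}\<times>K. (\<kappa>-1) * (w (u+1) k * \<bar>g m (u+1) k\<bar> * \<bar>g (m+1) u k\<bar>))"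
      by (rule sum_mono) (use pw in auto)
    also have "\<dots> = (\<kappa>-1) * Y'" unfolding Y'_def by (simp add: sum_distrib_left case_prod_beta)
    finally show ?thesis .
  qed
  have Y2: "Y\<^sup>2 \<le> (\<kappa>-1)\<^sup>2 * \<kappa> * S m * S (m+1)"
  proof -
    have "Y\<^sup>2 \<le> ((\<kappa>-1) * Y')\<^sup>2" using Yb unfolding Y_def by (intro power_mono) auto
    also have "\<dots> = (\<kappa>-1)\<^sup>2 * Y'\<^sup>2" by (simp add: power_mult_distrib)
    also have "\<dots> \<le> (\<kappa>-1)\<^sup>2 * (S m * (\<kappa> * S (m+1)))" using Y'2 by (intro mult_left_mono) auto
    finally show ?thesis by (simp add: algebra_simps)
  qed
  have "S (m+1) \<le> \<bar>B1\<bar> + \<bar>B2\<bar> + X + Y" using Seq unfolding X_def Y_def by linarith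
  moreover have "B1 = (\<Sum>k\<in>K. w (T-(m+1)) k * g (m+1) (T-(m+1)) k * g m (T-m) k)"
    unfolding B1_def N_def using NT N_def by simp
  ultimately show ?thesis using X2 Y2 unfolding X_def Y_def B2_def
    by (intro exI[of _ "\<bar>M\<bar>"] exI[of _ "\<bar>E\<bar>"]) auto
qed




lemma var_pair:
  fixes p v :: "nat \<Rightarrow> real"
  assumes ps: "(\<Sum>j<n. p j) = 1"
  shows "(\<Sum>k\<in>{..<n}\<times>{..<n}. p (fst k) * p (snd k) * (v (fst k) - v (snd k))\<^sup>2) = 2 * Var_P n p v"
proof -
  define m where "m = (\<Sum>j<n. p j * v j)"
  define s2 where "s2 = (\<Sum>j<n. p j * (v j)\<^sup>2)"
  have "(\<Sum>k\<in>{..<n}\<times>{..<n}. p (fst k) * p (snd k) * (v (fst k) - v (snd k))\<^sup>2)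
      = (\<Sum>i<n. \<Sum>j<n. p i * p j * (v i - v j)\<^sup>2)"
    by (simp add: sum.cartesian_product case_prod_beta)
  also have "\<dots> = (\<Sum>i<n. \<Sum>j<n. (p i * (v i)\<^sup>2) * p j + p i * (p j * (v j)\<^sup>2) - 2 * (p i * v i) * (p j * v j))"
    by (intro sum.cong refl) (simp add: power2_eq_square algebra_simps)
  also have "\<dots> = (\<Sum>i<n. (p i * (v i)\<^sup>2) * (\<Sum>j<n. p j) + p i * s2 - 2 * (p i * v i) * m)"
    unfolding s2_def m_def by (simp add: sum.distrib sum_subtractf sum_distrib_left)
  also have "\<dots> = (\<Sum>i<n. p i * (v i)\<^sup>2) + (\<Sum>i<n. p i) * s2 - 2 * (\<Sum>i<n. p i * v i) * m"
  proof -
    have h1: "(\<Sum>i<n. p i * s2) = (\<Sum>i<n. p i) * s2" by (simp add: sum_distrib_right)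
    have h2: "(\<Sum>i<n. 2 * (p i * v i) * m) = 2 * (\<Sum>i<n. p i * v i) * m" by (simp add: sum_distrib_left sum_distrib_right)
    show ?thesis using ps h1 h2 by (simp add: sum.distrib sum_subtractf)
  qed
  also have "\<dots> = s2 + s2 - 2 * m * m"
    using ps unfolding s2_def m_def by simp
  finally have L: "(\<Sum>k\<in>{..<n}\<times>{..<n}. p (fst k) * p (snd k) * (v (fst k) - v (snd k))\<^sup>2) = 2 * s2 - 2 * m * m" by simp
  have "Var_P n p v = (\<Sum>j<n. p j * (v j)\<^sup>2 - 2 * m * (p j * v j) + m * m * p j)"
    unfolding Var_P_def inner_n_def m_def[symmetric] by (intro sum.cong refl) (simp add: power2_eq_square algebra_simps)
  also have "\<dots> = s2 - 2 * m * m + m * m"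
    using ps unfolding s2_def by (simp add: sum.distrib sum_subtractf sum_distrib_left[symmetric] m_def)
  finally show ?thesis using L by simp
qed

lemma absdiff_sup:
  assumes "i < n" "j < n"
  shows "\<bar>v i - v j\<bar> \<le> 2 * sup_norm n v"
proof -
  have a: "\<bar>v x\<bar> \<le> sup_norm n v" if "x < n" for x
    unfolding sup_norm_def by (rule Max_ge) (use that in auto)
  show ?thesis using a[OF assms(1)] a[OF assms(2)] by linarith
qed

lemma bnd_sum:
  fixes w a b :: "'k \<Rightarrow> real"
  assumes "finite K" "\<forall>k\<in>K. w k \<ge> 0" "(\<Sum>k\<in>K. w k) = 1"
    "\<forall>k\<in>K. \<bar>a k\<bar> \<le> A" "\<forall>k\<in>K. \<bar>b k\<bar> \<le> B"
  shows "\<bar>\<Sum>k\<in>K. w k * a k * b k\<bar> \<le> A * B"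
proof -
  have "\<bar>\<Sum>k\<in>K. w k * a k * b k\<bar> \<le> (\<Sum>k\<in>K. \<bar>w k * a k * b k\<bar>)" by (rule sum_abs)
  also have "\<dots> \<le> (\<Sum>k\<in>K. w k * (A * B))"
  proof (rule sum_mono)
    fix k assume k: "k \<in> K"
    have "\<bar>a k\<bar> * \<bar>b k\<bar> \<le> A * B" using assms(4,5) k
      by (intro mult_mono) auto
    then show "\<bar>w k * a k * b k\<bar> \<le> w k * (A * B)"
      using assms(2) k by (simp add: abs_mult mult.assoc mult_left_mono)
  qed
  also have "\<dots> = A * B" using assms(3) by (simp add: sum_distrib_right[symmetric])
  finally show ?thesis .
qed

lemma sum_split_first:
  fixes f :: "nat \<Rightarrow> real"
  assumes "T \<ge> 1"
  shows "(\<Sum>t=1..T. f t) = f 1 + (\<Sum>s=1..T-1. f (Suc s))"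
proof -
  obtain T' where T: "T = Suc T'" using assms by (cases T) auto
  have "(\<Sum>t=1..T. f t) = f 1 + (\<Sum>t=Suc 1..Suc T'. f t)"
    unfolding T by (subst sum.atLeast_Suc_atMost) auto
  also have "(\<Sum>t=Suc 1..Suc T'. f t) = (\<Sum>s=1..T'. f (Suc s))"
    by (rule sum.shift_bounds_cl_Suc_ivl)
  finally show ?thesis using T by simp
qed

lemma sum_split_last:
  fixes f :: "nat \<Rightarrow> real"
  assumes "T \<ge> 1"
  shows "(\<Sum>t=1..T. f t) = (\<Sum>s=1..T-1. f s) + f T"
proof -
  obtain T' where T: "T = Suc T'" using assms by (cases T) auto
  show ?thesis unfolding T by (simp add: sum.cl_ivl_Suc)
qed




theorem lemmaC2:
  fixes n T H :: nat and \<alpha> \<alpha>0 \<zeta> :: real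
    and Z P :: "nat \<Rightarrow> nat \<Rightarrow> real"
  assumes "n \<ge> 2" and "T \<ge> 4"
    and H_def: "H = nat \<lceil>log 2 (real T)\<rceil>"
    and alpha_def: "\<alpha> = 1 / (4 * real H)"
    and alpha0_def: "\<alpha>0 = sqrt (\<alpha> / 8) / real H ^ 3"
    and Z_range: "\<forall>t. 1 \<le> t \<and> t \<le> T \<longrightarrow> (\<forall>j<n. 0 \<le> Z t j \<and> Z t j \<le> 1)"
    and Z0: "\<forall>j<n. Z 0 j = 0"
    and diff_bound: "\<forall>h t. h \<le> H \<and> 1 \<le> t \<and> t + h \<le> T \<longrightarrow>
          sup_norm n (fdiff h Z t) \<le> real H * (\<alpha>0 * real H ^ 3) ^ h"
    and close: "consecutively_close n T \<zeta> P"
    and zeta_lb: "1 / (2 * real T) \<le> \<zeta>" and zeta_ub: "\<zeta> \<le> \<alpha> ^ 4 / 8256"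
  shows "(\<Sum>t=1..T. Var_P n (P t) (\<lambda>j. Z t j - Z (t - 1) j))
         \<le> 2 * \<alpha> * (\<Sum>t=1..T. Var_P n (P t) (Z (t - 1))) + 165120 * (1 + \<zeta>) * real H ^ 5 + 2"
proof -
  have T4: "real T \<ge> 4" using assms(2) by simp
  have logT2: "log 2 (real T) \<ge> 2"
  proof -
    have "log 2 4 \<le> log 2 (real T)" using T4 by (subst log_le_cancel_iff) auto
    moreover have "log 2 (4::real) = 2"
      using log_powr_cancel[of 2 2] by (simp add: powr_numeral)
    ultimately show ?thesis by simp
  qed
  have c2: "(2::int) \<le> \<lceil>log 2 (real T)\<rceil>" using logT2 by (simp add: le_ceiling_iff)
  have H2: "H \<ge> 2" unfolding H_def using c2 by (simp add: le_nat_iff)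
  have Hceil: "real H = of_int \<lceil>log 2 (real T)\<rceil>" unfolding H_def using c2 by simp
  have H1r: "real H \<ge> 1" using H2 by simp
  have TleH: "real T \<le> 2 ^ H"
  proof -
    have "log 2 (real T) \<le> real H" unfolding Hceil by (rule le_of_int_ceiling)
    then have "2 powr (log 2 (real T)) \<le> 2 powr (real H)" by simp
    then show ?thesis using T4 by (simp add: powr_realpow)
  qed
  have HltT: "H < T"
  proof -
    have "real H - 1 < log 2 (real T)" unfolding Hceil using ceiling_correct[of "log 2 (real T)"] by linarith
    then have "2 powr (real H - 1) < 2 powr (log 2 (real T))" by simp
    then have a: "2 powr (real (H - 1)) < real T" using T4 H2 by (simp add: of_nat_diff)
    have "real H \<le> 2 ^ (H - 1)"
    proof -
      have "H - 1 < 2 ^ (H-1)" by (rule less_exp)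
      then have "H \<le> 2 ^ (H-1)" using H2 by linarith
      then show ?thesis by (metis of_nat_le_iff of_nat_numeral of_nat_power)
    qed
    then have "real H < real T" using a by (simp add: powr_realpow)
    then show ?thesis by simp
  qed
  have apos: "\<alpha> > 0" unfolding alpha_def using H1r by simp
  have ale: "\<alpha> \<le> 1/8" unfolding alpha_def using H2 by (simp add: field_simps)
  define q where "q = \<alpha>0 * real H ^ 3"
  have q_eq: "q = sqrt (\<alpha>/8)" unfolding q_def alpha0_def using H1r by simp
  have qpos: "q > 0" unfolding q_eq using apos by simp
  have q2: "q\<^sup>2 = \<alpha>/8" unfolding q_eq using apos by simp
  have q_ge: "q \<ge> \<alpha>/8"
  proof -
    have "q\<^sup>2 \<le> 1" using q2 ale by simp
    then have "q \<le> 1" using qpos by (simp add: power_le_one_iff abs_le_iff power2_le_iff_abs_le)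
    then have "q * q \<le> q" using qpos by (simp add: mult_le_cancel_left1)
    then show ?thesis using q2 by (simp add: power2_eq_square)
  qed
  have a8: "\<alpha>/8 = 1/(32 * real H)" unfolding alpha_def by simp
  have zpos: "\<zeta> > 0" using zeta_lb T4 by (smt (verit) divide_pos_pos)
  have zH4: "\<zeta> * real H ^ 4 \<le> 1/2113536"
  proof -
    have "\<alpha>^4 = 1 / (256 * real H ^ 4)" unfolding alpha_def by (simp add: power_mult_distrib power_divide)
    then have "\<zeta> \<le> 1 / (2113536 * real H ^ 4)" using zeta_ub by simp
    then show ?thesis using H1r by (simp add: field_simps)
  qed
  have zle: "\<zeta> \<le> 1/2113536"
  proof -
    have "\<zeta> \<le> \<zeta> * real H ^ 4" using zpos H1r by (simp add: one_le_power)
    then show ?thesis using zH4 by simp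
  qed
  define \<kappa> where "\<kappa> = (1+\<zeta>)\<^sup>2"
  have k1: "\<kappa> \<ge> 1" unfolding \<kappa>_def using zpos by (simp add: one_le_power)
  have zz: "\<zeta> * \<zeta> \<le> \<zeta>" using zle zpos by (simp add: mult_le_cancel_left1)
  have keq: "\<kappa> = 1 + 2*\<zeta> + \<zeta>*\<zeta>" unfolding \<kappa>_def by (simp add: power2_eq_square algebra_simps)
  have k2: "\<kappa> \<le> 2" using keq zle zpos zz by linarith
  have km1: "\<kappa> - 1 \<le> 3 * \<zeta>" using keq zle zpos zz by linarith
  have Ppos: "P t j > 0" if "1 \<le> t" "t \<le> T" "j < n" for t j
    using close that unfolding consecutively_close_def full_support_def by auto
  have Psum: "(\<Sum>j<n. P t j) = 1" if "1 \<le> t" "t \<le> T" for t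
    using close that unfolding consecutively_close_def in_simplex_def by auto
  have Pdn: "P t j \<le> (1+\<zeta>) * P (t+1) j" if "1 \<le> t" "t < T" "j < n" for t j
  proof -
    have "P t j / P (Suc t) j \<le> Max ((\<lambda>j. P t j / P (Suc t) j) ` {..<n})"
      by (rule Max_ge) (use that in auto)
    also have "\<dots> \<le> 1 + \<zeta>" using close that unfolding consecutively_close_def by auto
    finally show ?thesis using Ppos[of "Suc t" j] that by (simp add: divide_le_eq)
  qed
  have Pup: "P (t+1) j \<le> (1+\<zeta>) * P t j" if "1 \<le> t" "t < T" "j < n" for t j
  proof -
    have "P (Suc t) j / P t j \<le> Max ((\<lambda>j. P (Suc t) j / P t j) ` {..<n})"
      by (rule Max_ge) (use that in auto)
    also have "\<dots> \<le> 1 + \<zeta>" using close that unfolding consecutively_close_def by auto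
    finally show ?thesis using Ppos[of t j] that by (simp add: divide_le_eq)
  qed
  define K where "K = {..<n} \<times> {..<n}"
  have Kfin: "finite K" unfolding K_def by simp
  define w where "w t k = P t (fst k) * P t (snd k)" for t k
  define g where "g h t k = fdiff h Z t (fst k) - fdiff h Z t (snd k)" for h t k
  define S where "S h = (\<Sum>t=1..T-h. \<Sum>k\<in>K. w t k * (g h t k)\<^sup>2)" for h
  have w_nn: "w t k \<ge> 0" if "1 \<le> t" "t \<le> T" "k \<in> K" for t k
    using Ppos[of t "fst k"] Ppos[of t "snd k"] that unfolding w_def K_def by (auto simp: less_imp_le)
  have wup: "w (t+1) k \<le> \<kappa> * w t k" if "1 \<le> t" "t < T" "k \<in> K" for t k
  proof -
    have a: "fst k < n" "snd k < n" using that unfolding K_def by auto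
    have "w (t+1) k \<le> ((1+\<zeta>) * P t (fst k)) * ((1+\<zeta>) * P t (snd k))"
      unfolding w_def using Pup[OF that(1,2) a(1)] Pup[OF that(1,2) a(2)] Ppos[of "t+1" "fst k"] Ppos[of "t+1" "snd k"] that a
      by (intro mult_mono) auto
    then show ?thesis unfolding w_def \<kappa>_def by (simp add: power2_eq_square algebra_simps)
  qed
  have wdn: "w t k \<le> \<kappa> * w (t+1) k" if "1 \<le> t" "t < T" "k \<in> K" for t k
  proof -
    have a: "fst k < n" "snd k < n" using that unfolding K_def by auto
    have "w t k \<le> ((1+\<zeta>) * P (t+1) (fst k)) * ((1+\<zeta>) * P (t+1) (snd k))"
      unfolding w_def using Pdn[OF that(1,2) a(1)] Pdn[OF that(1,2) a(2)] Ppos[of t "fst k"] Ppos[of t "snd k"] that a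
      by (intro mult_mono) auto
    then show ?thesis unfolding w_def \<kappa>_def by (simp add: power2_eq_square algebra_simps)
  qed
  have wsum: "(\<Sum>k\<in>K. w t k) = 1" if "1 \<le> t" "t \<le> T" for t
  proof -
    have "(\<Sum>k\<in>K. w t k) = (\<Sum>i<n. \<Sum>j<n. P t i * P t j)"
      unfolding K_def w_def by (simp add: sum.cartesian_product case_prod_beta)
    also have "\<dots> = (\<Sum>i<n. P t i) * (\<Sum>j<n. P t j)" by (simp add: sum_product)
    finally show ?thesis using Psum[OF that] by simp
  qed
  have gsuc: "g (Suc h) t k = g h (Suc t) k - g h t k" for h t k
    unfolding g_def by simp
  have gbnd: "\<bar>g h t k\<bar> \<le> 2 * (real H * q ^ h)" if "h \<le> H" "1 \<le> t" "t + h \<le> T" "k \<in> K" for h t k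
  proof -
    have "\<bar>g h t k\<bar> \<le> 2 * sup_norm n (fdiff h Z t)" unfolding g_def
      by (rule absdiff_sup) (use that in \<open>auto simp: K_def\<close>)
    also have "\<dots> \<le> 2 * (real H * q ^ h)" using diff_bound that unfolding q_def by auto
    finally show ?thesis .
  qed
  have S_nn: "S h \<ge> 0" for h
    unfolding S_def by (intro sum_nonneg mult_nonneg_nonneg) (auto intro!: w_nn)
  define b where "b h = 8 * real H ^ 2 * q ^ h * q ^ (h - 1)" for h
  have rec: "\<forall>m. m+1 < H \<longrightarrow> (\<exists>X Y. X \<ge> 0 \<and> Y \<ge> 0 \<and> X\<^sup>2 \<le> \<kappa> * S m * S (m+2)
                  \<and> Y\<^sup>2 \<le> (\<kappa>-1)\<^sup>2 * \<kappa> * S m * S (m+1) \<and> S (m+1) \<le> b (m+1) + X + Y)"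
  proof (intro allI impI)
    fix m assume mH: "m + 1 < H"
    have mT: "m + 1 < T" using mH HltT by simp
    obtain X Y where XY: "X \<ge> 0" "Y \<ge> 0" "X\<^sup>2 \<le> \<kappa> * S m * S (m+2)"
      "Y\<^sup>2 \<le> (\<kappa>-1)\<^sup>2 * \<kappa> * S m * S (m+1)"
      "S (m+1) \<le> \<bar>\<Sum>k\<in>K. w (T-(m+1)) k * g (m+1) (T-(m+1)) k * g m (T-m) k\<bar>
                 + \<bar>\<Sum>k\<in>K. w 1 k * g (m+1) 1 k * g m 1 k\<bar> + X + Y"
      using rec_step[OF Kfin S_def gsuc w_nn wup wdn k1 mT] by blast
    have ga: "\<forall>k\<in>K. \<bar>g (m+1) (T-(m+1)) k\<bar> \<le> 2 * (real H * q ^ (m+1))"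
      by (intro ballI gbnd) (use mH mT in auto)
    have gb: "\<forall>k\<in>K. \<bar>g m (T-m) k\<bar> \<le> 2 * (real H * q ^ m)"
      by (intro ballI gbnd) (use mH mT in auto)
    have gc: "\<forall>k\<in>K. \<bar>g (m+1) 1 k\<bar> \<le> 2 * (real H * q ^ (m+1))"
      by (intro ballI gbnd) (use mH mT in auto)
    have gd: "\<forall>k\<in>K. \<bar>g m 1 k\<bar> \<le> 2 * (real H * q ^ m)"
      by (intro ballI gbnd) (use mH mT in auto)
    have wa: "\<forall>k\<in>K. w (T-(m+1)) k \<ge> 0" by (intro ballI w_nn) (use mT in auto)
    have wb: "\<forall>k\<in>K. w 1 k \<ge> 0" by (intro ballI w_nn) (use mT in auto)
    have B1: "\<bar>\<Sum>k\<in>K. w (T-(m+1)) k * g (m+1) (T-(m+1)) k * g m (T-m) k\<bar> \<le> (2 * (real H * q ^ (m+1))) * (2 * (real H * q ^ m))"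
      by (rule bnd_sum[OF Kfin wa wsum ga gb]) (use mT in auto)
    have B2: "\<bar>\<Sum>k\<in>K. w 1 k * g (m+1) 1 k * g m 1 k\<bar> \<le> (2 * (real H * q ^ (m+1))) * (2 * (real H * q ^ m))"
      by (rule bnd_sum[OF Kfin wb wsum gc gd]) (use mT in auto)
    have "b (m+1) = 2 * ((2 * (real H * q ^ (m+1))) * (2 * (real H * q ^ m)))"
      unfolding b_def by (simp add: power2_eq_square algebra_simps)
    then show "\<exists>X Y. X \<ge> 0 \<and> Y \<ge> 0 \<and> X\<^sup>2 \<le> \<kappa> * S m * S (m+2)
                  \<and> Y\<^sup>2 \<le> (\<kappa>-1)\<^sup>2 * \<kappa> * S m * S (m+1) \<and> S (m+1) \<le> b (m+1) + X + Y"
      using XY B1 B2 by (intro exI[of _ X] exI[of _ Y]) auto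
  qed
  define Wt where "Wt t v = (\<Sum>k\<in>K. w t k * (v (fst k) - v (snd k))\<^sup>2)" for t v
  have Wvar: "Var_P n (P t) v = Wt t v / 2" if "1 \<le> t" "t \<le> T" for t v
    using var_pair[OF Psum[OF that], of v] unfolding Wt_def K_def w_def by simp
  have Wt_nn: "Wt t v \<ge> 0" if "1 \<le> t" "t \<le> T" for t v
    unfolding Wt_def by (intro sum_nonneg mult_nonneg_nonneg) (use that in \<open>auto intro!: w_nn\<close>)
  have Wup: "Wt (s+1) v \<le> \<kappa> * Wt s v" if "1 \<le> s" "s < T" for s v
    unfolding Wt_def sum_distrib_left
    by (intro sum_mono) (use that in \<open>auto simp: mult.assoc[symmetric] intro!: mult_right_mono wup[simplified]\<close>)
  have Wdn: "Wt s v \<le> \<kappa> * Wt (s+1) v" if "1 \<le> s" "s < T" for s v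
    unfolding Wt_def sum_distrib_left
    by (intro sum_mono) (use that in \<open>auto simp: mult.assoc[symmetric] intro!: mult_right_mono wdn[simplified]\<close>)
  have Wt1: "Wt t v \<le> 1" if "1 \<le> t" "t \<le> T" "\<forall>j<n. 0 \<le> v j \<and> v j \<le> 1" for t v
  proof -
    have "Wt t v \<le> (\<Sum>k\<in>K. w t k * 1)" unfolding Wt_def
    proof (intro sum_mono mult_left_mono)
      fix k assume k: "k \<in> K"
      then have "fst k < n" "snd k < n" unfolding K_def by auto
      then have "\<bar>v (fst k) - v (snd k)\<bar> \<le> 1" using that(3) by (simp add: abs_le_iff) (smt (verit))
      then show "(v (fst k) - v (snd k))\<^sup>2 \<le> 1" by (simp add: abs_square_le_1)
      show "w t k \<ge> 0" using w_nn that k by simp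
    qed
    then show ?thesis using wsum[OF that(1,2)] by simp
  qed
  have T1: "T \<ge> 1" using assms(2) by simp
  have S0eq: "S 0 = (\<Sum>t=1..T. Wt t (Z t))" unfolding S_def Wt_def g_def by simp
  have S1eq: "S 1 = (\<Sum>s=1..T-1. Wt s (\<lambda>j. Z (Suc s) j - Z s j))" unfolding S_def Wt_def g_def
    by (simp add: algebra_simps)
  have LHSb: "(\<Sum>t=1..T. Var_P n (P t) (\<lambda>j. Z t j - Z (t - 1) j)) \<le> 1/2 + \<kappa>/2 * S 1"
  proof -
    have "(\<Sum>t=1..T. Var_P n (P t) (\<lambda>j. Z t j - Z (t - 1) j))
       = Var_P n (P 1) (\<lambda>j. Z 1 j - Z 0 j) + (\<Sum>s=1..T-1. Var_P n (P (Suc s)) (\<lambda>j. Z (Suc s) j - Z s j))"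
      using sum_split_first[OF T1] by simp
    also have "Var_P n (P 1) (\<lambda>j. Z 1 j - Z 0 j) \<le> 1/2"
    proof -
      have "Wt 1 (\<lambda>j. Z 1 j - Z 0 j) \<le> 1" using Z_range Z0 T1 by (intro Wt1) auto
      then show ?thesis using Wvar[of 1] T1 by simp
    qed
    also have "(\<Sum>s=1..T-1. Var_P n (P (Suc s)) (\<lambda>j. Z (Suc s) j - Z s j))
        \<le> (\<Sum>s=1..T-1. \<kappa>/2 * Wt s (\<lambda>j. Z (Suc s) j - Z s j))"
    proof (rule sum_mono)
      fix s assume s: "s \<in> {1..T-1}"
      have "Var_P n (P (Suc s)) (\<lambda>j. Z (Suc s) j - Z s j) = Wt (s+1) (\<lambda>j. Z (Suc s) j - Z s j) / 2"
        using Wvar[of "Suc s"] s T1 by (simp add: le_diff_conv2)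
      also have "\<dots> \<le> \<kappa> * Wt s (\<lambda>j. Z (Suc s) j - Z s j) / 2" using Wup[of s] s by (intro divide_right_mono) auto
      finally show "Var_P n (P (Suc s)) (\<lambda>j. Z (Suc s) j - Z s j) \<le> \<kappa>/2 * Wt s (\<lambda>j. Z (Suc s) j - Z s j)" by simp
    qed
    also have "(\<Sum>s=1..T-1. \<kappa>/2 * Wt s (\<lambda>j. Z (Suc s) j - Z s j)) = \<kappa>/2 * S 1"
      unfolding S1eq by (simp add: sum_distrib_left)
    finally show ?thesis by simp
  qed
  have RHSb: "(\<Sum>t=1..T. Var_P n (P t) (Z (t - 1))) \<ge> (S 0 - 1) / (2 * \<kappa>)"
  proof -
    have "(\<Sum>t=1..T. Var_P n (P t) (Z (t - 1)))
       = Var_P n (P 1) (Z 0) + (\<Sum>s=1..T-1. Var_P n (P (Suc s)) (Z s))"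
      using sum_split_first[OF T1] by simp
    moreover have "Var_P n (P 1) (Z 0) \<ge> 0" using Wvar[of 1 "Z 0"] Wt_nn[of 1 "Z 0"] T1 by simp
    moreover have "(\<Sum>s=1..T-1. Var_P n (P (Suc s)) (Z s)) \<ge> (\<Sum>s=1..T-1. Wt s (Z s) / (2 * \<kappa>))"
    proof (rule sum_mono)
      fix s assume s: "s \<in> {1..T-1}"
      have "Wt s (Z s) / (2 * \<kappa>) \<le> (\<kappa> * Wt (s+1) (Z s)) / (2 * \<kappa>)"
        using Wdn[of s] s k1 by (intro divide_right_mono) auto
      also have "\<dots> = Wt (s+1) (Z s) / 2" using k1 by simp
      also have "\<dots> = Var_P n (P (Suc s)) (Z s)" using Wvar[of "Suc s"] s T1 by (simp add: le_diff_conv2)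
      finally show "Wt s (Z s) / (2 * \<kappa>) \<le> Var_P n (P (Suc s)) (Z s)" .
    qed
    moreover have "(\<Sum>s=1..T-1. Wt s (Z s) / (2 * \<kappa>)) \<ge> (S 0 - 1) / (2 * \<kappa>)"
    proof -
      have "S 0 = (\<Sum>s=1..T-1. Wt s (Z s)) + Wt T (Z T)" unfolding S0eq using sum_split_last[OF T1] by simp
      moreover have "Wt T (Z T) \<le> 1" using Z_range T1 by (intro Wt1) auto
      ultimately have "S 0 - 1 \<le> (\<Sum>s=1..T-1. Wt s (Z s))" by simp
      then show ?thesis using k1 by (simp add: sum_divide_distrib[symmetric] divide_right_mono)
    qed
    ultimately show ?thesis by linarith
  qed
  define F where "F t = (\<Sum>k\<in>K. w t k * (g 0 t k)\<^sup>2)" for t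
  have F_nn: "F t \<ge> 0" if "1 \<le> t" "t \<le> T" for t
    unfolding F_def by (intro sum_nonneg mult_nonneg_nonneg) (use that in \<open>auto intro!: w_nn\<close>)
  have S1le: "S 1 \<le> (2*\<kappa> + 2) * S 0"
  proof -
    have "S 1 \<le> (\<Sum>s=1..T-1. 2*\<kappa> * F (Suc s) + 2 * F s)"
      unfolding S_def F_def sum_distrib_left sum.distrib[symmetric]
    proof (intro sum_mono)
      fix s k assume s: "s \<in> {1..T-1}" and k: "k \<in> K"
      have sT: "1 \<le> s" "s < T" using s T1 by auto
      have "w s k * (g 1 s k)\<^sup>2 = w s k * (g 0 (Suc s) k - g 0 s k)\<^sup>2" using gsuc[of 0 s k] by simp
      also have "\<dots> \<le> w s k * (2 * (g 0 (Suc s) k)\<^sup>2 + 2 * (g 0 s k)\<^sup>2)"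
      proof (rule mult_left_mono)
        show "(g 0 (Suc s) k - g 0 s k)\<^sup>2 \<le> 2 * (g 0 (Suc s) k)\<^sup>2 + 2 * (g 0 s k)\<^sup>2"
        proof -
          have "2 * (g 0 (Suc s) k)\<^sup>2 + 2 * (g 0 s k)\<^sup>2 - (g 0 (Suc s) k - g 0 s k)\<^sup>2 = (g 0 (Suc s) k + g 0 s k)\<^sup>2"
            by (simp add: power2_eq_square algebra_simps)
          moreover have "(g 0 (Suc s) k + g 0 s k)\<^sup>2 \<ge> 0" by simp
          ultimately show ?thesis by linarith
        qed
        show "w s k \<ge> 0" using w_nn sT k by simp
      qed
      also have "\<dots> = 2 * (w s k * (g 0 (Suc s) k)\<^sup>2) + 2 * (w s k * (g 0 s k)\<^sup>2)" by (simp add: algebra_simps)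
      also have "\<dots> \<le> 2 * \<kappa> * (w (Suc s) k * (g 0 (Suc s) k)\<^sup>2) + 2 * (w s k * (g 0 s k)\<^sup>2)"
      proof -
        have "w s k * (g 0 (Suc s) k)\<^sup>2 \<le> (\<kappa> * w (Suc s) k) * (g 0 (Suc s) k)\<^sup>2"
          using wdn[OF sT k] by (intro mult_right_mono) auto
        then show ?thesis by (simp add: algebra_simps)
      qed
      finally show "w s k * (g (1::nat) s k)\<^sup>2 \<le> 2 * \<kappa> * (w (Suc s) k * (g 0 (Suc s) k)\<^sup>2) + 2 * (w s k * (g 0 s k)\<^sup>2)" .
    qed
    also have "\<dots> = 2*\<kappa> * (\<Sum>s=1..T-1. F (Suc s)) + 2 * (\<Sum>s=1..T-1. F s)"
      by (simp add: sum.distrib sum_distrib_left)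
    also have "\<dots> \<le> 2*\<kappa> * S 0 + 2 * S 0"
    proof -
      have e1: "S 0 = F 1 + (\<Sum>s=1..T-1. F (Suc s))" using sum_split_first[OF T1, of F] unfolding S_def F_def by simp
      have e2: "S 0 = (\<Sum>s=1..T-1. F s) + F T" using sum_split_last[OF T1, of F] unfolding S_def F_def by simp
      have "F 1 \<ge> 0" "F T \<ge> 0" using F_nn T1 by auto
      then have "(\<Sum>s=1..T-1. F (Suc s)) \<le> S 0" "(\<Sum>s=1..T-1. F s) \<le> S 0" using e1 e2 by auto
      then show ?thesis using k1 by (intro add_mono mult_left_mono) auto
    qed
    finally show ?thesis by (simp add: algebra_simps)
  qed
  have SHup: "S H \<le> real T * (2 * (real H * q ^ H))\<^sup>2"
  proof -
    have "S H \<le> (\<Sum>t=1..T-H. \<Sum>k\<in>K. w t k * (2 * (real H * q ^ H))\<^sup>2)"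
      unfolding S_def
    proof (intro sum_mono mult_left_mono)
      fix t k assume t: "t \<in> {1..T-H}" and k: "k \<in> K"
      have gg: "\<bar>g H t k\<bar> \<le> 2 * (real H * q ^ H)" using t k HltT by (intro gbnd) auto
      show "(g H t k)\<^sup>2 \<le> (2 * (real H * q ^ H))\<^sup>2"
        using power_mono[OF gg abs_ge_zero, of 2] by simp
      show "w t k \<ge> 0" using t k by (intro w_nn) auto
    qed
    also have "\<dots> = (\<Sum>t=1..T-H. (2 * (real H * q ^ H))\<^sup>2)"
      by (intro sum.cong refl) (auto simp: sum_distrib_right[symmetric] wsum)
    also have "\<dots> = real (T-H) * (2 * (real H * q ^ H))\<^sup>2" by simp
    also have "\<dots> \<le> real T * (2 * (real H * q ^ H))\<^sup>2" by (intro mult_right_mono) auto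
    finally show ?thesis .
  qed
  define C0 where "C0 = 165120 * (1 + \<zeta>) * real H ^ 5"
  define \<rho> where "\<rho> = 2 * \<alpha> / \<kappa>\<^sup>2"
  have kpos: "\<kappa> > 0" using k1 by simp
  have rpos: "\<rho> > 0" unfolding \<rho>_def using apos kpos by simp
  have r2: "\<rho>/2 \<ge> \<alpha>/4"
  proof -
    have "\<kappa>\<^sup>2 \<le> 2\<^sup>2" using k1 k2 by (intro power_mono) auto
    then have "\<kappa>\<^sup>2 \<le> 4" by simp
    then show ?thesis unfolding \<rho>_def using apos kpos by (simp add: field_simps)
  qed
  have H5: "real H ^ 4 \<le> real H ^ 5" using H1r by (simp add: power_increasing)
  have C0b: "C0 \<ge> 165120 * real H ^ 5" unfolding C0_def using zpos by (simp add: mult_right_mono)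
  show ?thesis
  proof (rule ccontr)
    define LS where "LS = (\<Sum>t=1..T. Var_P n (P t) (\<lambda>j. Z t j - Z (t - 1) j))"
    define RS where "RS = (\<Sum>t=1..T. Var_P n (P t) (Z (t - 1)))"
    assume "\<not> ?thesis"
    then have neg: "LS > 2 * \<alpha> * RS + C0 + 2" unfolding LS_def RS_def C0_def by simp
    have "2 * \<alpha> * RS \<ge> 2 * \<alpha> * ((S 0 - 1) / (2 * \<kappa>))"
      using RHSb apos unfolding RS_def by (intro mult_left_mono) auto
    also have "2 * \<alpha> * ((S 0 - 1) / (2 * \<kappa>)) = (\<alpha>/\<kappa>) * S 0 - \<alpha>/\<kappa>"
      using kpos by (simp add: field_simps)
    finally have R1: "2 * \<alpha> * RS \<ge> (\<alpha>/\<kappa>) * S 0 - \<alpha>/\<kappa>" .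
    have ak: "\<alpha>/\<kappa> \<le> 1" using ale k1 apos by (simp add: divide_le_eq)
    have "1/2 + \<kappa>/2 * S 1 > (\<alpha>/\<kappa>) * S 0 + C0 + 1" using neg LHSb R1 ak unfolding LS_def by linarith
    then have kS1: "\<kappa> * S 1 > 2 * (\<alpha>/\<kappa>) * S 0 + 2 * C0" by (simp add: field_simps)
    have "\<kappa> * (\<rho> * S 0 + C0) = 2 * (\<alpha>/\<kappa>) * S 0 + \<kappa> * C0" unfolding \<rho>_def using kpos
      by (simp add: field_simps power2_eq_square)
    also have "\<dots> \<le> 2 * (\<alpha>/\<kappa>) * S 0 + 2 * C0"
      using k2 C0b H1r by (intro add_left_mono mult_right_mono) (auto intro: order_trans[OF _ C0b])
    finally have "\<kappa> * (\<rho> * S 0 + C0) < \<kappa> * S 1" using kS1 by linarith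
    then have S1big: "S 1 > \<rho> * S 0 + C0" using kpos by (simp add: mult_less_cancel_left_pos)
    have H5pos: "real H ^ 5 > 0" using H1r by simp
    have C0pos: "C0 > 0" using C0b H5pos by linarith
    have base: "S 1 \<ge> \<rho> * S 0" using S1big C0pos by linarith
    have "6 * S 0 \<ge> S 1"
    proof -
      have "(2*\<kappa>+2) * S 0 \<le> 6 * S 0" using k2 S_nn[of 0] by (intro mult_right_mono) auto
      then show ?thesis using S1le by linarith
    qed
    moreover have "\<rho> * S 0 \<ge> 0" using rpos S_nn[of 0] by simp
    ultimately have S0big: "S 0 > 27520 * real H ^ 5" using S1big C0b by linarith
    then have S0pos: "S 0 > 0" using H5pos by linarith
    have S0H4: "S 0 \<ge> 4096 * real H ^ 4" using S0big H5 zero_le_power[of "real H" 4] by linarith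
    define \<delta> where "\<delta> = 1 / (16 * real H)"
    have dpos: "\<delta> \<ge> 0" unfolding \<delta>_def by simp
    have dsum: "\<delta> + \<delta> \<le> 1" unfolding \<delta>_def using H1r by (simp add: field_simps)
    have bnd: "\<forall>h. 1 \<le> h \<and> h < H \<longrightarrow> b h \<le> \<delta> * (\<rho>/2)^h * S 0"
    proof (intro allI impI)
      fix h assume h: "1 \<le> h \<and> h < H"
      define X where "X = q ^ h * q ^ (h - 1)"
      have Xnn: "X \<ge> 0" unfolding X_def using qpos by simp
      have qq: "X * q = (\<alpha>/8)^h"
      proof -
        have "q ^ (h-1) * q = q ^ h" using h by (metis power_minus_mult less_le_trans zero_less_one less_le)
        then have "X * q = q ^ h * q ^ h" unfolding X_def by (simp add: mult.assoc)
        also have "\<dots> = (q\<^sup>2) ^ h" by (simp add: power2_eq_square power_mult_distrib)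
        finally show ?thesis using q2 by simp
      qed
      have Xb: "X \<le> 32 * real H * (\<alpha>/8)^h"
      proof -
        have "X * (1/(32 * real H)) \<le> X * q" using q_ge a8 Xnn by (intro mult_left_mono) auto
        then have "X / (32 * real H) \<le> (\<alpha>/8)^h" using qq by simp
        then show ?thesis using H1r by (simp add: divide_le_eq mult.commute)
      qed
      have ap: "(\<alpha>/8)^h \<le> (\<rho>/2)^h" using r2 apos by (intro power_mono) auto
      have "b h = 8 * real H ^ 2 * X" unfolding b_def X_def by simp
      also have "\<dots> \<le> 8 * real H ^ 2 * (32 * real H * (\<rho>/2)^h)"
        using Xb ap H1r by (intro mult_left_mono order_trans[OF Xb]) auto
      also have "\<dots> = (256 * real H ^ 3) * (\<rho>/2)^h" by (simp add: power2_eq_square power3_eq_cube)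
      also have "\<dots> \<le> (\<delta> * S 0) * (\<rho>/2)^h"
      proof (rule mult_right_mono)
        have "256 * real H ^ 3 * (16 * real H) = 4096 * real H ^ 4" by (simp add: power3_eq_cube power4_eq_xxxx)
        then have "256 * real H ^ 3 * (16 * real H) \<le> S 0" using S0H4 by simp
        then show "256 * real H ^ 3 \<le> \<delta> * S 0" unfolding \<delta>_def using H1r by (simp add: field_simps)
        show "(\<rho>/2)^h \<ge> 0" using rpos by simp
      qed
      finally show "b h \<le> \<delta> * (\<rho>/2)^h * S 0" by (simp add: algebra_simps)
    qed
    have d2: "(\<kappa>-1)\<^sup>2 * \<kappa> * (2/\<rho>) \<le> \<delta>\<^sup>2"
    proof -
      have km0: "\<kappa> - 1 \<ge> 0" using k1 by simp
      have a1: "(\<kappa>-1)\<^sup>2 \<le> (3*\<zeta>)\<^sup>2" using km1 km0 by (intro power_mono) auto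
      have a2: "\<kappa>^3 \<le> 8" using power_mono[OF k2, of 3] k1 by simp
      have "(\<kappa>-1)\<^sup>2 * \<kappa> * (2/\<rho>) = (\<kappa>-1)\<^sup>2 * \<kappa>^3 * (4 * real H)"
        unfolding \<rho>_def alpha_def using kpos H1r by (simp add: field_simps power2_eq_square power3_eq_cube)
      also have "\<dots> \<le> (3*\<zeta>)\<^sup>2 * 8 * (4 * real H)"
        using a1 a2 H1r k1 by (intro mult_right_mono mult_mono) auto
      also have "\<dots> = 288 * real H * \<zeta>\<^sup>2" by (simp add: power2_eq_square)
      also have "\<dots> \<le> \<delta>\<^sup>2"
      proof -
        have z8: "\<zeta>\<^sup>2 * real H ^ 3 \<le> (\<zeta> * real H ^ 4)\<^sup>2"
        proof -
          have "real H ^ 3 \<le> real H ^ 8" using H1r by (intro power_increasing) auto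
          then have "\<zeta>\<^sup>2 * real H ^ 3 \<le> \<zeta>\<^sup>2 * real H ^ 8" by (intro mult_left_mono) auto
          also have "\<dots> = (\<zeta> * real H ^ 4)\<^sup>2" by (simp add: power_mult_distrib power_mult[symmetric])
          finally show ?thesis .
        qed
        have "(\<zeta> * real H ^ 4)\<^sup>2 \<le> (1/2113536)\<^sup>2" using zH4 zpos H1r by (intro power_mono) auto
        moreover have "(1/2113536::real)\<^sup>2 \<le> 1/73728" by (simp add: power2_eq_square)
        ultimately have "\<zeta>\<^sup>2 * real H ^ 3 \<le> 1/73728" using z8 by linarith
        then have "288 * real H * \<zeta>\<^sup>2 * (256 * real H ^ 2) \<le> 1"
          by (simp add: power2_eq_square power3_eq_cube algebra_simps)
        then show ?thesis unfolding \<delta>_def using H1r by (simp add: field_simps power2_eq_square)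
      qed
      finally show ?thesis .
    qed
    have gam: "((1-\<delta>-\<delta>)\<^sup>2/\<kappa>)^H \<ge> 1/2"
    proof -
      define e where "e = \<delta> + \<delta> + \<zeta>"
      have eb: "2 * real H * e \<le> 1/2"
      proof -
        have "2 * real H * (\<delta> + \<delta>) = 1/4" unfolding \<delta>_def using H1r by simp
        moreover have "real H * \<zeta> \<le> \<zeta> * real H ^ 4" using H1r zpos
          by (simp add: mult.commute mult_left_mono power_increasing[of 1 4, simplified])
        ultimately show ?thesis unfolding e_def using zH4 by (simp add: algebra_simps)
      qed
      have e0: "e \<ge> 0" unfolding e_def using dpos zpos by simp
      have "1 * e \<le> (2 * real H) * e" using H1r e0 by (intro mult_right_mono) auto
      then have e1: "e \<le> 1" using eb by simp
      have step1: "(1 - e)\<^sup>2 \<le> (1-\<delta>-\<delta>)\<^sup>2/\<kappa>"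
      proof -
        have zz2: "(1-\<zeta>)\<^sup>2 * \<kappa> \<le> 1"
        proof -
          have "(1-\<zeta>)\<^sup>2 * \<kappa> = (1 - \<zeta>*\<zeta>)\<^sup>2" unfolding \<kappa>_def by (simp add: power2_eq_square algebra_simps)
          also have "\<dots> \<le> 1"
          proof -
            have "\<zeta> * \<zeta> \<le> 1" using zz zle by linarith
            then show ?thesis using zpos by (intro power_le_one) auto
          qed
          finally show ?thesis .
        qed
        have "(1 - e) \<le> (1-\<delta>-\<delta>) * (1-\<zeta>)" unfolding e_def using dpos zpos dsum zle
          by (simp add: algebra_simps mult_nonneg_nonneg)
        then have "(1-e)\<^sup>2 \<le> ((1-\<delta>-\<delta>) * (1-\<zeta>))\<^sup>2" using e1 by (intro power_mono) auto
        also have "\<dots> = (1-\<delta>-\<delta>)\<^sup>2 * (1-\<zeta>)\<^sup>2" by (simp add: power_mult_distrib)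
        also have "\<dots> \<le> (1-\<delta>-\<delta>)\<^sup>2 * (1/\<kappa>)"
        proof (rule mult_left_mono)
          show "(1-\<zeta>)\<^sup>2 \<le> 1/\<kappa>" using zz2 kpos by (simp add: le_divide_eq mult.commute)
        qed simp
        also have "\<dots> = (1-\<delta>-\<delta>)\<^sup>2 / \<kappa>" by simp
        finally show ?thesis .
      qed
      have "1/2 \<le> 1 + real (2*H) * (-e)" using eb by simp
      also have "\<dots> \<le> (1 + (-e)) ^ (2*H)" using e1 by (intro Bernoulli_inequality) auto
      also have "\<dots> = ((1-e)\<^sup>2)^H" by (simp add: power_mult)
      also have "\<dots> \<le> ((1-\<delta>-\<delta>)\<^sup>2/\<kappa>)^H" using step1 by (intro power_mono) auto
      finally show ?thesis .
    qed
    have SH: "S H \<ge> (\<rho>/2)^H * S 0"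
      by (rule chain[OF _ rec bnd base S0pos rpos k1 d2 dpos dpos dsum gam]) (use S_nn in auto)
    have "(\<alpha>/4)^H * S 0 \<le> (\<rho>/2)^H * S 0"
      using r2 apos S0pos by (intro mult_right_mono power_mono) auto
    also have "\<dots> \<le> real T * (2 * (real H * q ^ H))\<^sup>2" using SH SHup by linarith
    also have "\<dots> = real T * 4 * real H ^ 2 * (q\<^sup>2)^H" by (simp add: power_mult_distrib power_mult[symmetric] mult.commute)
    also have "\<dots> = real T * 4 * real H ^ 2 * (\<alpha>/8)^H" by (simp only: q2)
    also have "(\<alpha>/8)^H = (1/2)^H * (\<alpha>/4)^H"
    proof -
      have "\<alpha>/8 = (1/2) * (\<alpha>/4)" by simp
      then show ?thesis by (simp only: power_mult_distrib)
    qed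
    also have "real T * 4 * real H ^ 2 * ((1/2)^H * (\<alpha>/4)^H) = (real T * (1/2)^H) * 4 * real H ^ 2 * (\<alpha>/4)^H"
      by (simp only: mult_ac)
    also have "\<dots> \<le> 1 * 4 * real H ^ 2 * (\<alpha>/4)^H"
    proof -
      have "real T * (1/2)^H \<le> 1" using TleH by (simp add: power_divide divide_le_eq)
      then show ?thesis using apos by (intro mult_right_mono) auto
    qed
    finally have "(\<alpha>/4)^H * S 0 \<le> (\<alpha>/4)^H * (4 * real H ^ 2)" by (simp add: algebra_simps)
    then have "S 0 \<le> 4 * real H ^ 2" using apos by (simp add: mult_le_cancel_left_pos)
    moreover have "4 * real H ^ 2 < 27520 * real H ^ 5"
    proof -
      have "real H ^ 2 \<le> real H ^ 5" using H1r by (intro power_increasing) auto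
      moreover have "real H ^ 2 > 0" using H1r by simp
      ultimately show ?thesis by linarith
    qed
    ultimately show False using S0big by linarith
  qed
qed


end
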